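(* Let $i\in\{1,2\}$ and let $(X,e_X,\mu_X)$ and $(Y,e_Y,\mu_Y)$ be H-equivalent $\mathrm{NP}_i$-digital H-spaces. If $(X,e_X,\mu_X)$ is homotopy-associative, then $(Y,e_Y,\mu_Y)$ is homotopy-associative.
   Context: A digital image is a finite set $X\subset\mathbb{Z}^n$ with a reflexive symmetric adjacency relation (a finite reflexive graph); continuous maps send adjacent points to adjacent points. On products, $\mathrm{NP}_u$ declares two tuples adjacent iff coordinates are adjacent in at most $u$ positions and equal elsewhere. An $\mathrm{NP}_i$-homotopy from $f$ to $g:X\to Y$ is an $\mathrm{NP}_i$-continuous $H:X\times[0,m]_{\mathbb{Z}}\to Y$ with $H(\cdot,0)=f$, $H(\cdot,m)=g$; write $f\simeq_i g$ (products in the domain carry $\mathrm{NP}_i$). $(f,g)(x)=(f(x),g(x))$, $(f\times g)(x,y)=(f(x),g(y))$; $c_e$ is the constant map at $e$. An $\mathrm{NP}_i$-digital H-space is $(X,e,\mu)$ with $\mu:X\times X\to X$ $\mathrm{NP}_i$-continuous, $\mu\circ(\mathrm{id}_X,c_e)\simeq_i\mathrm{id}_X$, $\mu\circ(c_e,\mathrm{id}_X)\simeq_i\mathrm{id}_X$ (homotopies need not be pointed). It is homotopy-associative if $\mu\circ(\mathrm{id}_X\times\mu)\simeq_i\mu\circ(\mu\times\mathrm{id}_X)$ as maps $X\times X\times X\to X$. Two H-spaces $(X,e_X,\mu_X)$, $(Y,e_Y,\mu_Y)$ are H-equivalent if there are continuous pointed maps $f:(X,e_X)\to(Y,e_Y)$,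 $g:(Y,e_Y)\to(X,e_X)$ with $f\circ g\simeq_i\mathrm{id}_Y$, $g\circ f\simeq_i\mathrm{id}_X$, $f\circ\mu_X\simeq_i\mu_Y\circ(f\times f)$, $g\circ\mu_Y\simeq_i\mu_X\circ(g\times g)$. *)

theory Defs
  imports Main
begin

definition dimage :: "'a set \<Rightarrow> ('a \<Rightarrow> 'a \<Rightarrow> bool) \<Rightarrow> bool" where
  "dimage X A \<longleftrightarrow> finite X \<and> (\<forall>x\<in>X. A x x) \<and> (\<forall>x\<in>X. \<forall>y\<in>X. A x y \<longrightarrow> A y x)"

definition dcont :: "'a set \<Rightarrow> ('a \<Rightarrow> 'a \<Rightarrow> bool) \<Rightarrow> 'b set \<Rightarrow> ('b \<Rightarrow> 'b \<Rightarrow> bool) \<Rightarrow> ('a \<Rightarrow> 'b) \<Rightarrow> bool" where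
  "dcont X A Y B f \<longleftrightarrow> f ` X \<subseteq> Y \<and> (\<forall>x\<in>X. \<forall>y\<in>X. A x y \<longrightarrow> B (f x) (f y))"

definition np2 :: "nat \<Rightarrow> ('a \<Rightarrow> 'a \<Rightarrow> bool) \<Rightarrow> ('b \<Rightarrow> 'b \<Rightarrow> bool) \<Rightarrow> 'a \<times> 'b \<Rightarrow> 'a \<times> 'b \<Rightarrow> bool" where
  "np2 u A B p q \<longleftrightarrow> A (fst p) (fst q) \<and> B (snd p) (snd q) \<and>
     of_bool (fst p \<noteq> fst q) + of_bool (snd p \<noteq> snd q) \<le> u"

definition np3 :: "nat \<Rightarrow> ('a \<Rightarrow> 'a \<Rightarrow> bool) \<Rightarrow> 'a \<times> 'a \<times> 'a \<Rightarrow> 'a \<times> 'a \<times> 'a \<Rightarrow> bool" where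
  "np3 u A p q \<longleftrightarrow> (case p of (x1, x2, x3) \<Rightarrow> case q of (y1, y2, y3) \<Rightarrow>
     A x1 y1 \<and> A x2 y2 \<and> A x3 y3 \<and>
     of_bool (x1 \<noteq> y1) + of_bool (x2 \<noteq> y2) + of_bool (x3 \<noteq> y3) \<le> u)"

definition c1 :: "int \<Rightarrow> int \<Rightarrow> bool" where
  "c1 s t \<longleftrightarrow> \<bar>s - t\<bar> \<le> 1"

definition dhomotopic :: "nat \<Rightarrow> 'a set \<Rightarrow> ('a \<Rightarrow> 'a \<Rightarrow> bool) \<Rightarrow> 'b set \<Rightarrow> ('b \<Rightarrow> 'b \<Rightarrow> bool)
    \<Rightarrow> ('a \<Rightarrow> 'b) \<Rightarrow> ('a \<Rightarrow> 'b) \<Rightarrow> bool" where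
  "dhomotopic i X A Y B f g \<longleftrightarrow>
     (\<exists>m::nat. \<exists>H :: 'a \<times> int \<Rightarrow> 'b.
        dcont (X \<times> {0..int m}) (np2 i A c1) Y B H \<and>
        (\<forall>x\<in>X. H (x, 0) = f x \<and> H (x, int m) = g x))"

definition hspace :: "nat \<Rightarrow> 'a set \<Rightarrow> ('a \<Rightarrow> 'a \<Rightarrow> bool) \<Rightarrow> 'a \<Rightarrow> ('a \<times> 'a \<Rightarrow> 'a) \<Rightarrow> bool" where
  "hspace i X A e \<mu> \<longleftrightarrow> dimage X A \<and> e \<in> X \<and>
     dcont (X \<times> X) (np2 i A A) X A \<mu> \<and>
     dhomotopic i X A X A (\<lambda>x. \<mu> (x, e)) id \<and>
     dhomotopic i X A X A (\<lambda>x. \<mu> (e, x)) id"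

definition hassoc :: "nat \<Rightarrow> 'a set \<Rightarrow> ('a \<Rightarrow> 'a \<Rightarrow> bool) \<Rightarrow> ('a \<times> 'a \<Rightarrow> 'a) \<Rightarrow> bool" where
  "hassoc i X A \<mu> \<longleftrightarrow>
     dhomotopic i (X \<times> X \<times> X) (np3 i A) X A
       (\<lambda>(x, y, z). \<mu> (x, \<mu> (y, z))) (\<lambda>(x, y, z). \<mu> (\<mu> (x, y), z))"

definition hequiv :: "nat \<Rightarrow> 'a set \<Rightarrow> ('a \<Rightarrow> 'a \<Rightarrow> bool) \<Rightarrow> 'a \<Rightarrow> ('a \<times> 'a \<Rightarrow> 'a)
    \<Rightarrow> 'b set \<Rightarrow> ('b \<Rightarrow> 'b \<Rightarrow> bool) \<Rightarrow> 'b \<Rightarrow> ('b \<times> 'b \<Rightarrow> 'b) \<Rightarrow> bool" where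
  "hequiv i X A eX \<mu>X Y B eY \<mu>Y \<longleftrightarrow>
     (\<exists>f g. dcont X A Y B f \<and> f eX = eY \<and> dcont Y B X A g \<and> g eY = eX \<and>
        dhomotopic i Y B Y B (f \<circ> g) id \<and>
        dhomotopic i X A X A (g \<circ> f) id \<and>
        dhomotopic i (X \<times> X) (np2 i A A) Y B (f \<circ> \<mu>X) (\<lambda>(x, x'). \<mu>Y (f x, f x')) \<and>
        dhomotopic i (Y \<times> Y) (np2 i B B) X A (g \<circ> \<mu>Y) (\<lambda>(y, y'). \<mu>X (g y, g y')))"

end

theory Submission imports Defs begin

lemma np2c1: "np2 i A c1 (x,t) (x',t') \<longleftrightarrow> A x x' \<and> \<bar>t - t'\<bar> \<le> 1 \<and> of_bool (x \<noteq> x') + of_bool (t \<noteq> t') \<le> i"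
  by (simp add: np2_def c1_def)

lemma dh_cong:
  assumes "dhomotopic i X A Y B f g" "\<And>x. x \<in> X \<Longrightarrow> f x = f' x" "\<And>x. x \<in> X \<Longrightarrow> g x = g' x"
  shows "dhomotopic i X A Y B f' g'"
  using assms unfolding dhomotopic_def by metis

lemma dh_post:
  assumes "dhomotopic i X A Y B f g" "dcont Y B Z C k"
  shows "dhomotopic i X A Z C (k \<circ> f) (k \<circ> g)"
proof -
  obtain m H where H: "dcont (X \<times> {0..int m}) (np2 i A c1) Y B H"
    "\<forall>x\<in>X. H (x, 0) = f x \<and> H (x, int m) = g x"
    using assms(1) unfolding dhomotopic_def by blast
  have "dcont (X \<times> {0..int m}) (np2 i A c1) Z C (k \<circ> H)"
    using H(1) assms(2) unfolding dcont_def by (auto simp: image_subset_iff)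
  then show ?thesis unfolding dhomotopic_def using H(2) by (intro exI[of _ m] exI[of _ "k \<circ> H"]) auto
qed

lemma dh_pre:
  assumes "dhomotopic i X A Y B f g" "dcont X' A' X A p"
  shows "dhomotopic i X' A' Y B (f \<circ> p) (g \<circ> p)"
proof -
  obtain m H where H: "dcont (X \<times> {0..int m}) (np2 i A c1) Y B H"
    "\<forall>x\<in>X. H (x, 0) = f x \<and> H (x, int m) = g x"
    using assms(1) unfolding dhomotopic_def by blast
  have "dcont (X' \<times> {0..int m}) (np2 i A' c1) Y B (\<lambda>(x,t). H (p x, t))"
    unfolding dcont_def
  proof safe
    fix y x t assume "x \<in> X'" "t \<in> {0..int m}"
    then show "H (p x, t) \<in> Y" using H(1) assms(2) unfolding dcont_def by (auto simp: image_subset_iff)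
  next
    fix x t x' t' assume a: "x \<in> X'" "t \<in> {0..int m}" "x' \<in> X'" "t' \<in> {0..int m}"
      "np2 i A' c1 (x, t) (x', t')"
    have "np2 i A c1 (p x, t) (p x', t')"
      using a assms(2) unfolding np2c1 dcont_def
      by (auto simp: of_bool_def split: if_splits)
    moreover have "p x \<in> X" "p x' \<in> X" using a assms(2) unfolding dcont_def by auto
    ultimately show "B (H (p x, t)) (H (p x', t'))"
      using H(1) a unfolding dcont_def by auto
  qed
  then show ?thesis unfolding dhomotopic_def using H(2) assms(2) unfolding dcont_def
    by (intro exI[of _ m] exI[of _ "\<lambda>(x,t). H (p x, t)"]) auto
qed

lemma dh_sym:
  assumes "dhomotopic i X A Y B f g"
  shows "dhomotopic i X A Y B g f"
proof -
  obtain m H where H: "dcont (X \<times> {0..int m}) (np2 i A c1) Y B H"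
    "\<forall>x\<in>X. H (x, 0) = f x \<and> H (x, int m) = g x"
    using assms(1) unfolding dhomotopic_def by blast
  have "dcont (X \<times> {0..int m}) (np2 i A c1) Y B (\<lambda>(x,t). H (x, int m - t))"
    unfolding dcont_def
  proof safe
    fix y x t assume "x \<in> X" "t \<in> {0..int m}"
    then show "H (x, int m - t) \<in> Y" using H(1) unfolding dcont_def by (auto simp: image_subset_iff)
  next
    fix x t x' t' assume a: "x \<in> X" "t \<in> {0..int m}" "x' \<in> X" "t' \<in> {0..int m}"
      "np2 i A c1 (x, t) (x', t')"
    have "np2 i A c1 (x, int m - t) (x', int m - t')"
      using a unfolding np2c1 by (auto simp: of_bool_def split: if_splits)
    then show "B (H (x, int m - t)) (H (x', int m - t'))"
      using H(1) a unfolding dcont_def by auto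
  qed
  then show ?thesis unfolding dhomotopic_def using H(2)
    by (intro exI[of _ m] exI[of _ "\<lambda>(x,t). H (x, int m - t)"]) auto
qed

lemma dh_trans:
  assumes "dhomotopic i X A Y B f g" "dhomotopic i X A Y B g h"
  shows "dhomotopic i X A Y B f h"
proof -
  obtain m1 H1 where H1: "dcont (X \<times> {0..int m1}) (np2 i A c1) Y B H1"
    "\<forall>x\<in>X. H1 (x, 0) = f x \<and> H1 (x, int m1) = g x"
    using assms(1) unfolding dhomotopic_def by blast
  obtain m2 H2 where H2: "dcont (X \<times> {0..int m2}) (np2 i A c1) Y B H2"
    "\<forall>x\<in>X. H2 (x, 0) = g x \<and> H2 (x, int m2) = h x"
    using assms(2) unfolding dhomotopic_def by blast
  define H where "H = (\<lambda>(x,t). if t \<le> int m1 then H1 (x,t) else H2 (x, t - int m1))"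
  have "dcont (X \<times> {0..int (m1+m2)}) (np2 i A c1) Y B H"
    unfolding dcont_def
  proof safe
    fix x t assume "x \<in> X" "t \<in> {0..int (m1+m2)}"
    then show "H (x,t) \<in> Y" using H1(1) H2(1) unfolding dcont_def H_def by auto
  next
    fix x t x' t' assume a: "x \<in> X" "t \<in> {0..int (m1+m2)}" "x' \<in> X" "t' \<in> {0..int (m1+m2)}"
      and n: "np2 i A c1 (x, t) (x', t')"
    show "B (H (x,t)) (H (x',t'))"
    proof (cases "t \<le> int m1")
      case True
      show ?thesis
      proof (cases "t' \<le> int m1")
        case True
        then show ?thesis using \<open>t \<le> int m1\<close> H1(1) a n unfolding dcont_def H_def by auto
      next
        case False
        then have "t = int m1" "t' = int m1 + 1" using True n unfolding np2c1 by auto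
        then have "H (x,t) = H2 (x, 0)" using H1(2) H2(2) a unfolding H_def by auto
        moreover have "np2 i A c1 (x, 0) (x', t' - int m1)"
          using n \<open>t = int m1\<close> \<open>t' = int m1 + 1\<close> unfolding np2c1 by auto
        ultimately show ?thesis using False H2(1) a \<open>t' = int m1 + 1\<close> unfolding dcont_def H_def by auto
      qed
    next
      case False
      show ?thesis
      proof (cases "t' \<le> int m1")
        case True
        then have "t' = int m1" "t = int m1 + 1" using False n unfolding np2c1 by auto
        then have "H (x',t') = H2 (x', 0)" using H1(2) H2(2) a unfolding H_def by auto
        moreover have "np2 i A c1 (x, t - int m1) (x', 0)"
          using n \<open>t' = int m1\<close> \<open>t = int m1 + 1\<close> unfolding np2c1 by auto
        ultimately show ?thesis using False H2(1) a \<open>t = int m1 + 1\<close> unfolding dcont_def H_def by auto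
      next
        case F2: False
        have "np2 i A c1 (x, t - int m1) (x', t' - int m1)"
          using n unfolding np2c1 by auto
        then show ?thesis using False F2 H2(1) a unfolding dcont_def H_def by auto
      qed
    qed
  qed
  then show ?thesis unfolding dhomotopic_def using H1(2) H2(2)
    by (intro exI[of _ "m1+m2"] exI[of _ H]) (auto simp: H_def)
qed

lemma dcont_comp: "dcont X A Y B f \<Longrightarrow> dcont Y B Z C g \<Longrightarrow> dcont X A Z C (g \<circ> f)"
  unfolding dcont_def by (auto simp: image_subset_iff)

lemma dh_prodL:
  assumes i: "i \<ge> 1" and K: "dhomotopic i (Y \<times> Y) (np2 i B B) X A k0 k1"
    and u: "dcont Y B X A u" and mu: "dcont (X \<times> X) (np2 i A A) X A mu"
  shows "dhomotopic i (Y \<times> Y \<times> Y) (np3 i B) X A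
     (\<lambda>(y1,y2,y3). mu (u y1, k0 (y2,y3))) (\<lambda>(y1,y2,y3). mu (u y1, k1 (y2,y3)))"
proof -
  obtain m H where H: "dcont ((Y \<times> Y) \<times> {0..int m}) (np2 i (np2 i B B) c1) X A H"
    "\<forall>x\<in>Y \<times> Y. H (x, 0) = k0 x \<and> H (x, int m) = k1 x"
    using K unfolding dhomotopic_def by blast
  define H' where "H' = (\<lambda>((y1::'a,y2::'a,y3::'a),t). mu (u y1, H ((y2,y3),t)))"
  have "dcont ((Y \<times> Y \<times> Y) \<times> {0..int m}) (np2 i (np3 i B) c1) X A H'"
    unfolding dcont_def
  proof safe
    fix z y1 y2 y3 t assume a: "y1 \<in> Y" "y2 \<in> Y" "y3 \<in> Y" "t \<in> {0..int m}"
    then have "u y1 \<in> X" "H ((y2,y3),t) \<in> X" using u H(1) unfolding dcont_def by auto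
    then show "H' ((y1,y2,y3),t) \<in> X" using mu unfolding dcont_def H'_def by auto
  next
    fix y1 y2 y3 t y1' y2' y3' t'
    assume a: "y1 \<in> Y" "y2 \<in> Y" "y3 \<in> Y" "t \<in> {0..int m}"
      "y1' \<in> Y" "y2' \<in> Y" "y3' \<in> Y" "t' \<in> {0..int m}"
      and n: "np2 i (np3 i B) c1 ((y1,y2,y3),t) ((y1',y2',y3'),t')"
    have n1: "np2 i (np2 i B B) c1 ((y2,y3),t) ((y2',y3'),t')"
      using n unfolding np2_def np3_def by (auto simp: of_bool_def split: if_splits)
    have hK: "A (H ((y2,y3),t)) (H ((y2',y3'),t'))" using H(1) n1 a unfolding dcont_def by auto
    have hu: "A (u y1) (u y1')" using u a n unfolding dcont_def np2_def np3_def by auto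
    have cnt: "y1 \<noteq> y1' \<Longrightarrow> i = 1 \<Longrightarrow> y2 = y2' \<and> y3 = y3' \<and> t = t'"
      using n unfolding np2_def np3_def by (auto simp: of_bool_def split: if_splits)
    have "np2 i A A (u y1, H ((y2,y3),t)) (u y1', H ((y2',y3'),t'))"
      using hK hu i cnt unfolding np2_def
      by (cases "i = 1") (auto simp: of_bool_def)
    moreover have "u y1 \<in> X" "H ((y2,y3),t) \<in> X" "u y1' \<in> X" "H ((y2',y3'),t') \<in> X"
      using u H(1) a unfolding dcont_def by auto
    ultimately show "A (H' ((y1,y2,y3),t)) (H' ((y1',y2',y3'),t'))"
      using mu unfolding dcont_def H'_def by auto
  qed
  then show ?thesis unfolding dhomotopic_def using H(2)
    by (intro exI[of _ m] exI[of _ H']) (auto simp: H'_def)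
qed

lemma dh_prodR:
  assumes i: "i \<ge> 1" and K: "dhomotopic i (Y \<times> Y) (np2 i B B) X A k0 k1"
    and u: "dcont Y B X A u" and mu: "dcont (X \<times> X) (np2 i A A) X A mu"
  shows "dhomotopic i (Y \<times> Y \<times> Y) (np3 i B) X A
     (\<lambda>(y1,y2,y3). mu (k0 (y1,y2), u y3)) (\<lambda>(y1,y2,y3). mu (k1 (y1,y2), u y3))"
proof -
  obtain m H where H: "dcont ((Y \<times> Y) \<times> {0..int m}) (np2 i (np2 i B B) c1) X A H"
    "\<forall>x\<in>Y \<times> Y. H (x, 0) = k0 x \<and> H (x, int m) = k1 x"
    using K unfolding dhomotopic_def by blast
  define H' where "H' = (\<lambda>((y1::'a,y2::'a,y3::'a),t). mu (H ((y1,y2),t), u y3))"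
  have "dcont ((Y \<times> Y \<times> Y) \<times> {0..int m}) (np2 i (np3 i B) c1) X A H'"
    unfolding dcont_def
  proof safe
    fix z y1 y2 y3 t assume a: "y1 \<in> Y" "y2 \<in> Y" "y3 \<in> Y" "t \<in> {0..int m}"
    then have "u y3 \<in> X" "H ((y1,y2),t) \<in> X" using u H(1) unfolding dcont_def by auto
    then show "H' ((y1,y2,y3),t) \<in> X" using mu unfolding dcont_def H'_def by auto
  next
    fix y1 y2 y3 t y1' y2' y3' t'
    assume a: "y1 \<in> Y" "y2 \<in> Y" "y3 \<in> Y" "t \<in> {0..int m}"
      "y1' \<in> Y" "y2' \<in> Y" "y3' \<in> Y" "t' \<in> {0..int m}"
      and n: "np2 i (np3 i B) c1 ((y1,y2,y3),t) ((y1',y2',y3'),t')"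
    have n1: "np2 i (np2 i B B) c1 ((y1,y2),t) ((y1',y2'),t')"
      using n unfolding np2_def np3_def by (auto simp: of_bool_def split: if_splits)
    have hK: "A (H ((y1,y2),t)) (H ((y1',y2'),t'))" using H(1) n1 a unfolding dcont_def by auto
    have hu: "A (u y3) (u y3')" using u a n unfolding dcont_def np2_def np3_def by auto
    have cnt: "y3 \<noteq> y3' \<Longrightarrow> i = 1 \<Longrightarrow> y1 = y1' \<and> y2 = y2' \<and> t = t'"
      using n unfolding np2_def np3_def by (auto simp: of_bool_def split: if_splits)
    have "np2 i A A (H ((y1,y2),t), u y3) (H ((y1',y2'),t'), u y3')"
      using hK hu i cnt unfolding np2_def
      by (cases "i = 1") (auto simp: of_bool_def)
    moreover have "u y3 \<in> X" "H ((y1,y2),t) \<in> X" "u y3' \<in> X" "H ((y1',y2'),t') \<in> X"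
      using u H(1) a unfolding dcont_def by auto
    ultimately show "A (H' ((y1,y2,y3),t)) (H' ((y1',y2',y3'),t'))"
      using mu unfolding dcont_def H'_def by auto
  qed
  then show ?thesis unfolding dhomotopic_def using H(2)
    by (intro exI[of _ m] exI[of _ H']) (auto simp: H'_def)
qed

lemma cont_p1:
  assumes mu: "dcont (Y \<times> Y) (np2 i B B) Y B mu"
  shows "dcont (Y \<times> Y \<times> Y) (np3 i B) (Y \<times> Y) (np2 i B B) (\<lambda>(y1,y2,y3). (y1, mu (y2,y3)))"
  unfolding dcont_def
proof safe
  fix z y1 y2 y3 assume "y1 \<in> Y" "y2 \<in> Y" "y3 \<in> Y"
  then show "mu (y2,y3) \<in> Y" using mu unfolding dcont_def by auto
next
  fix y1 y2 y3 y1' y2' y3'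
  assume a: "y1 \<in> Y" "y2 \<in> Y" "y3 \<in> Y" "y1' \<in> Y" "y2' \<in> Y" "y3' \<in> Y"
    and n: "np3 i B (y1,y2,y3) (y1',y2',y3')"
  have n1: "np2 i B B (y2,y3) (y2',y3')" using n unfolding np2_def np3_def
    by (auto simp: of_bool_def split: if_splits)
  then have "B (mu (y2,y3)) (mu (y2',y3'))" using mu a unfolding dcont_def by auto
  then show "np2 i B B (y1, mu (y2,y3)) (y1', mu (y2',y3'))"
    using n unfolding np2_def np3_def by (auto simp: of_bool_def split: if_splits)
qed

lemma cont_p2:
  assumes mu: "dcont (Y \<times> Y) (np2 i B B) Y B mu"
  shows "dcont (Y \<times> Y \<times> Y) (np3 i B) (Y \<times> Y) (np2 i B B) (\<lambda>(y1,y2,y3). (mu (y1,y2), y3))"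
  unfolding dcont_def
proof safe
  fix z y1 y2 y3 assume "y1 \<in> Y" "y2 \<in> Y" "y3 \<in> Y"
  then show "mu (y1,y2) \<in> Y" using mu unfolding dcont_def by auto
next
  fix y1 y2 y3 y1' y2' y3'
  assume a: "y1 \<in> Y" "y2 \<in> Y" "y3 \<in> Y" "y1' \<in> Y" "y2' \<in> Y" "y3' \<in> Y"
    and n: "np3 i B (y1,y2,y3) (y1',y2',y3')"
  have n1: "np2 i B B (y1,y2) (y1',y2')" using n unfolding np2_def np3_def
    by (auto simp: of_bool_def split: if_splits)
  then have "B (mu (y1,y2)) (mu (y1',y2'))" using mu a unfolding dcont_def by auto
  then show "np2 i B B (mu (y1,y2), y3) (mu (y1',y2'), y3')"
    using n unfolding np2_def np3_def by (auto simp: of_bool_def split: if_splits)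
qed

lemma cont_g3:
  assumes g: "dcont Y B X A g"
  shows "dcont (Y \<times> Y \<times> Y) (np3 i B) (X \<times> X \<times> X) (np3 i A) (\<lambda>(y1,y2,y3). (g y1, g y2, g y3))"
  using g unfolding dcont_def np3_def by (auto simp: of_bool_def split: if_splits)

theorem mainTheorem4:
  fixes i :: nat
    and X :: "'a set" and A :: "'a \<Rightarrow> 'a \<Rightarrow> bool" and eX :: 'a and \<mu>X :: "'a \<times> 'a \<Rightarrow> 'a"
    and Y :: "'b set" and B :: "'b \<Rightarrow> 'b \<Rightarrow> bool" and eY :: 'b and \<mu>Y :: "'b \<times> 'b \<Rightarrow> 'b"
  assumes "i \<in> {1, 2}"
    and "hspace i X A eX \<mu>X"
    and "hspace i Y B eY \<mu>Y"
    and "hequiv i X A eX \<mu>X Y B eY \<mu>Y"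
    and "hassoc i X A \<mu>X"
  shows "hassoc i Y B \<mu>Y"
proof -
  have i: "i \<ge> 1" using assms(1) by auto
  have muX: "dcont (X \<times> X) (np2 i A A) X A \<mu>X" using assms(2) unfolding hspace_def by auto
  have muY: "dcont (Y \<times> Y) (np2 i B B) Y B \<mu>Y" using assms(3) unfolding hspace_def by auto
  obtain f g where f: "dcont X A Y B f" and g: "dcont Y B X A g"
    and fg: "dhomotopic i Y B Y B (f \<circ> g) id"
    and gmu: "dhomotopic i (Y \<times> Y) (np2 i B B) X A (g \<circ> \<mu>Y) (\<lambda>(y, y'). \<mu>X (g y, g y'))"
    using assms(4) unfolding hequiv_def by blast
  have asX: "dhomotopic i (X \<times> X \<times> X) (np3 i A) X A
       (\<lambda>(x, y, z). \<mu>X (x, \<mu>X (y, z))) (\<lambda>(x, y, z). \<mu>X (\<mu>X (x, y), z))"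
    using assms(5) unfolding hassoc_def by auto
  define p1 where "p1 = (\<lambda>(y1::'b,y2::'b,y3::'b). (y1, \<mu>Y (y2,y3)))"
  define p2 where "p2 = (\<lambda>(y1::'b,y2::'b,y3::'b). (\<mu>Y (y1,y2), y3))"
  define g3 where "g3 = (\<lambda>(y1,y2,y3). (g y1, g y2, g y3))"
  have cp1: "dcont (Y \<times> Y \<times> Y) (np3 i B) (Y \<times> Y) (np2 i B B) p1"
    unfolding p1_def by (rule cont_p1[OF muY])
  have cp2: "dcont (Y \<times> Y \<times> Y) (np3 i B) (Y \<times> Y) (np2 i B B) p2"
    unfolding p2_def by (rule cont_p2[OF muY])
  have cg3: "dcont (Y \<times> Y \<times> Y) (np3 i B) (X \<times> X \<times> X) (np3 i A) g3"
    unfolding g3_def by (rule cont_g3[OF g])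
  have ca: "dcont (Y \<times> Y \<times> Y) (np3 i B) Y B (\<mu>Y \<circ> p1)" by (rule dcont_comp[OF cp1 muY])
  have cb: "dcont (Y \<times> Y \<times> Y) (np3 i B) Y B (\<mu>Y \<circ> p2)" by (rule dcont_comp[OF cp2 muY])
  have s1: "dhomotopic i (Y \<times> Y \<times> Y) (np3 i B) Y B (\<lambda>(x, y, z). \<mu>Y (x, \<mu>Y (y, z))) (f \<circ> (g \<circ> \<mu>Y \<circ> p1))"
    by (rule dh_sym, rule dh_cong[OF dh_pre[OF fg ca]]) (auto simp: p1_def)
  have s2: "dhomotopic i (Y \<times> Y \<times> Y) (np3 i B) Y B (f \<circ> (g \<circ> \<mu>Y \<circ> p1))
      (f \<circ> (\<lambda>(y1,y2,y3). \<mu>X (g y1, g (\<mu>Y (y2, y3)))))"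
    by (rule dh_cong[OF dh_post[OF dh_pre[OF gmu cp1] f]]) (auto simp: p1_def)
  have s3: "dhomotopic i (Y \<times> Y \<times> Y) (np3 i B) Y B (f \<circ> (\<lambda>(y1,y2,y3). \<mu>X (g y1, g (\<mu>Y (y2, y3)))))
      (f \<circ> (\<lambda>(y1,y2,y3). \<mu>X (g y1, \<mu>X (g y2, g y3))))"
    by (rule dh_cong[OF dh_post[OF dh_prodL[OF i gmu g muX] f]]) auto
  have s4: "dhomotopic i (Y \<times> Y \<times> Y) (np3 i B) Y B (f \<circ> (\<lambda>(y1,y2,y3). \<mu>X (g y1, \<mu>X (g y2, g y3))))
      (f \<circ> (\<lambda>(y1,y2,y3). \<mu>X (\<mu>X (g y1, g y2), g y3)))"
    by (rule dh_cong[OF dh_post[OF dh_pre[OF asX cg3] f]]) (auto simp: g3_def)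
  have s5: "dhomotopic i (Y \<times> Y \<times> Y) (np3 i B) Y B (f \<circ> (\<lambda>(y1,y2,y3). \<mu>X (\<mu>X (g y1, g y2), g y3)))
      (f \<circ> (\<lambda>(y1,y2,y3). \<mu>X (g (\<mu>Y (y1, y2)), g y3)))"
    by (rule dh_cong[OF dh_post[OF dh_prodR[OF i dh_sym[OF gmu] g muX] f]]) auto
  have s6: "dhomotopic i (Y \<times> Y \<times> Y) (np3 i B) Y B (f \<circ> (\<lambda>(y1,y2,y3). \<mu>X (g (\<mu>Y (y1, y2)), g y3)))
      (f \<circ> (g \<circ> \<mu>Y \<circ> p2))"
    by (rule dh_cong[OF dh_post[OF dh_pre[OF dh_sym[OF gmu] cp2] f]]) (auto simp: p2_def)
  have s7: "dhomotopic i (Y \<times> Y \<times> Y) (np3 i B) Y B (f \<circ> (g \<circ> \<mu>Y \<circ> p2)) (\<lambda>(x, y, z). \<mu>Y (\<mu>Y (x, y), z))"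
    by (rule dh_cong[OF dh_pre[OF fg cb]]) (auto simp: p2_def)
  show ?thesis unfolding hassoc_def
    using dh_trans[OF s1 dh_trans[OF s2 dh_trans[OF s3 dh_trans[OF s4 dh_trans[OF s5 dh_trans[OF s6 s7]]]]]] .
qed

end
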